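(* Let $G_1$ and $G_2$ be two vertex-disjoint 2-edge-colored graphs with Hamiltonian alternating cycles $C_1=x_0x_1\cdots x_{2n-1}x_0$ and $C_2=y_0y_1\cdots y_{2m-1}y_0$, respectively, and let $G\in G_1\oplus G_2$. Suppose there is no good pair in $G$ (between $C_1$ and $C_2$), and that for each $i\in\{1,2\}$ there is a vertex of $C_i$ which is non-singular with respect to $C_{3-i}$. Let $m_1=\min\{n,m\}$ and $M_2=\max\{n,m\}$. Then for each vertex $v\in V(G)$ and each even integer $\ell\in[4m_1,2M_2]$, there is an alternating cycle of length $\ell$ in $G$ passing through $v$.
   Context: All graphs are simple, with edges colored red or blue. An alternating cycle is a cycle in which consecutive edges have different colors; a Hamiltonian alternating cycle of a graph is an alternating cycle through all its vertices. For vertex-disjoint 2-edge-colored graphs $G_1,G_2$, the colored generalized sum $G_1\oplus G_2$ is the set of 2-edge-colored graphs $G$ with $V(G)=V(G_1)\cup V(G_2)$, $G\langle V(G_i)\rangle=G_i$ with the same coloring, and exactly one edge (of arbitrary fixed color) between each $u\in V(G_1)$ and $w\in V(G_2)$; these latter edges are the exterior edges. For $v$ on an alternating cycle $C$, $v^r$ (resp. $v^b$) is the neighbor of $v$ on $C$ with $vv^r$ red (resp. $vv^b$ blue). For an exterior edge $vw$ with $v\in V(C_1)$, $w\in V(C_2)$: if $vw$ is red, $vw,v^rw^r$ is a good pair if $v^rw^r$ is red; if $vw$ is blue, $vw,v^bw^b$ is a good pair if $v^bw^b$ is blue. A vertex $v\in V(C_i)$ is singular with respect to $C_{3-i}$ if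 all edges between $v$ and $V(C_{3-i})$ have the same color, and non-singular otherwise. For integers $a\le b$, $[a,b]=\{a,a+1,\dots,b\}$. *)

theory Defs
  imports Main
begin

datatype color = Red | Blue

text \<open>A 2-edge-colored simple graph is a finite vertex set V together with a
  symmetric, irreflexive partial colouring col: col u v = None means no edge,
  col u v = Some c means an edge of colour c.\<close>
definition cgraph :: "'a set \<Rightarrow> ('a \<Rightarrow> 'a \<Rightarrow> color option) \<Rightarrow> bool" where
  "cgraph V col \<longleftrightarrow> finite V \<and> (\<forall>u v. col u v = col v u) \<and> (\<forall>v. col v v = None)
     \<and> (\<forall>u v. col u v \<noteq> None \<longrightarrow> u \<in> V \<and> v \<in> V)"

definition alt_cycle :: "('a \<Rightarrow> 'a \<Rightarrow> color option) \<Rightarrow> 'a list \<Rightarrow> bool" where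
  "alt_cycle col xs \<longleftrightarrow> length xs \<ge> 3 \<and> distinct xs \<and>
     (\<forall>i < length xs. col (xs ! i) (xs ! ((i + 1) mod length xs)) \<noteq> None) \<and>
     (\<forall>i < length xs. col (xs ! i) (xs ! ((i + 1) mod length xs))
                    \<noteq> col (xs ! ((i + 1) mod length xs)) (xs ! ((i + 2) mod length xs)))"

definition ham_alt_cycle :: "'a set \<Rightarrow> ('a \<Rightarrow> 'a \<Rightarrow> color option) \<Rightarrow> 'a list \<Rightarrow> bool" where
  "ham_alt_cycle V col xs \<longleftrightarrow> alt_cycle col xs \<and> set xs = V"

definition in_colored_sum ::
  "'a set \<Rightarrow> ('a \<Rightarrow> 'a \<Rightarrow> color option) \<Rightarrow> 'a set \<Rightarrow> ('a \<Rightarrow> 'a \<Rightarrow> color option)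
   \<Rightarrow> 'a set \<Rightarrow> ('a \<Rightarrow> 'a \<Rightarrow> color option) \<Rightarrow> bool" where
  "in_colored_sum V col V1 col1 V2 col2 \<longleftrightarrow>
     cgraph V col \<and> V = V1 \<union> V2 \<and>
     (\<forall>u\<in>V1. \<forall>v\<in>V1. col u v = col1 u v) \<and>
     (\<forall>u\<in>V2. \<forall>v\<in>V2. col u v = col2 u v) \<and>
     (\<forall>u\<in>V1. \<forall>w\<in>V2. col u w \<noteq> None)"

definition cyc_adj :: "'a list \<Rightarrow> 'a \<Rightarrow> 'a \<Rightarrow> bool" where
  "cyc_adj xs u v \<longleftrightarrow> (\<exists>i < length xs.
      (xs ! i = u \<and> xs ! ((i + 1) mod length xs) = v) \<or>
      (xs ! i = v \<and> xs ! ((i + 1) mod length xs) = u))"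

definition cyc_nbr :: "('a \<Rightarrow> 'a \<Rightarrow> color option) \<Rightarrow> 'a list \<Rightarrow> color \<Rightarrow> 'a \<Rightarrow> 'a" where
  "cyc_nbr col xs c v = (THE u. cyc_adj xs v u \<and> col v u = Some c)"

definition has_good_pair :: "('a \<Rightarrow> 'a \<Rightarrow> color option) \<Rightarrow> 'a list \<Rightarrow> 'a list \<Rightarrow> bool" where
  "has_good_pair col C1 C2 \<longleftrightarrow> (\<exists>v\<in>set C1. \<exists>w\<in>set C2. \<exists>c.
      col v w = Some c \<and> col (cyc_nbr col C1 c v) (cyc_nbr col C2 c w) = Some c)"

definition non_singular :: "('a \<Rightarrow> 'a \<Rightarrow> color option) \<Rightarrow> 'a \<Rightarrow> 'a set \<Rightarrow> bool" where
  "non_singular col v W \<longleftrightarrow> (\<exists>w1\<in>W. \<exists>w2\<in>W. col v w1 = Some Red \<and> col v w2 = Some Blue)"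

end

theory Submission
  imports Defs
begin



definition colr :: "bool \<Rightarrow> color" where "colr b = (if b then Blue else Red)"

lemma colr_inj[simp]: "(colr a = colr b) = (a = b)" by (auto simp: colr_def)

lemma col_neq_Red[simp]: "(c \<noteq> Red) = (c = Blue)" by (cases c) auto
lemma col_neq_Blue[simp]: "(c \<noteq> Blue) = (c = Red)" by (cases c) auto

lemma other_col: "x \<noteq> None \<Longrightarrow> x \<noteq> Some (colr b) \<Longrightarrow> x = Some (colr (\<not> b))"
  by (cases x) (auto simp: colr_def)

definition Xc :: "'a list \<Rightarrow> int \<Rightarrow> 'a" where
  "Xc C i = C ! nat (i mod int (length C))"

lemma Xc_mod: "Xc C (i mod int (length C)) = Xc C i"
  by (simp add: Xc_def)

lemma Xc_nat: "k < length C \<Longrightarrow> Xc C (int k) = C ! k"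
  by (simp add: Xc_def)

lemma Xc_in: "C \<noteq> [] \<Longrightarrow> Xc C i \<in> set C"
  unfolding Xc_def by (rule nth_mem) (simp add: nat_less_iff)

lemma Xc_inj: "C \<noteq> [] \<Longrightarrow> distinct C \<Longrightarrow> Xc C i = Xc C j \<Longrightarrow> i mod int (length C) = j mod int (length C)"
proof -
  assume ne: "C \<noteq> []" and d: "distinct C" and e: "Xc C i = Xc C j"
  show ?thesis
  proof (cases "C = []")
    case True then show ?thesis using ne by simp
  next
    case False
    then have "nat (i mod int (length C)) < length C" "nat (j mod int (length C)) < length C"
      by (simp_all add: nat_less_iff)
    with d e have "nat (i mod int (length C)) = nat (j mod int (length C))"
      unfolding Xc_def using nth_eq_iff_index_eq by blast
    then show ?thesis using False by (simp add: eq_nat_nat_iff)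
  qed
qed

lemma Xc_surj: "x \<in> set C \<Longrightarrow> \<exists>i. x = Xc C i"
  by (metis Xc_nat in_set_conv_nth)

lemma Xc_suc: "C \<noteq> [] \<Longrightarrow> C ! ((nat (i mod int (length C)) + 1) mod length C) = Xc C (i + 1)"
proof -
  assume "C \<noteq> []"
  then have L: "int (length C) > 0" by simp
  have "int ((nat (i mod int (length C)) + 1) mod length C) = (i + 1) mod int (length C)"
    using L by (simp add: zmod_int mod_add_right_eq add.commute)
  then show ?thesis unfolding Xc_def by (metis nat_int)
qed

lemma alt_Xc:
  assumes "alt_cycle col C"
  shows "col (Xc C i) (Xc C (i+1)) \<noteq> None"
    and "col (Xc C i) (Xc C (i+1)) \<noteq> col (Xc C (i+1)) (Xc C (i+2))"
proof -
  have ne: "C \<noteq> []" using assms by (auto simp: alt_cycle_def)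
  define k where "k = nat (i mod int (length C))"
  have k: "k < length C" using ne by (simp add: k_def nat_less_iff)
  have e1: "C ! k = Xc C i" by (simp add: k_def Xc_def)
  have e2: "C ! ((k+1) mod length C) = Xc C (i+1)" using Xc_suc[OF ne] k_def by simp
  have e3: "C ! ((k+2) mod length C) = Xc C (i+2)"
  proof -
    have L: "int (length C) > 0" using ne by simp
    have "int ((k + 2) mod length C) = (i + 2) mod int (length C)"
      using L by (simp add: k_def zmod_int mod_add_right_eq add.commute)
    then show ?thesis unfolding Xc_def by (metis nat_int)
  qed
  from assms k show "col (Xc C i) (Xc C (i+1)) \<noteq> None"
    unfolding alt_cycle_def using e1 e2 by metis
  have "(k + 1) mod length C + 1 = k + 2 \<or> True" by simp
  have e4: "((k + 1) mod length C + 1) mod length C = (k+2) mod length C"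
    by (simp add: mod_Suc_eq)
  from assms k show "col (Xc C i) (Xc C (i+1)) \<noteq> col (Xc C (i+1)) (Xc C (i+2))"
    unfolding alt_cycle_def using e1 e2 e3 e4
    by (metis mod_add_left_eq numeral_2_eq_2 add_2_eq_Suc')
qed




lemma Xc_cong: "a mod int (length C) = b mod int (length C) \<Longrightarrow> Xc C a = Xc C b"
  by (simp add: Xc_def)

lemma Xc_col:
  assumes "alt_cycle col C"
  shows "col (Xc C i) (Xc C (i+1)) = Some (colr (odd i \<noteq> (col (Xc C 0) (Xc C 1) = Some Blue)))"
proof -
  define b where "b = (col (Xc C 0) (Xc C 1) = Some Blue)"
  have P0: "col (Xc C 0) (Xc C (0+1)) = Some (colr (odd (0::int) \<noteq> b))"
    using alt_Xc(1)[OF assms, of 0] unfolding b_def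
    by (cases "col (Xc C 0) (Xc C 1)") (auto simp: colr_def)
  show ?thesis unfolding b_def[symmetric]
  proof (induct i rule: int_induct[where k=0])
    case base then show ?case using P0 by simp
  next
    case (step1 i)
    have a: "col (Xc C (i+1)) (Xc C (i+1+1)) \<noteq> None" using alt_Xc(1)[OF assms, of "i+1"] .
    have b: "col (Xc C (i+1)) (Xc C (i+1+1)) \<noteq> Some (colr (odd i \<noteq> b))"
      using alt_Xc(2)[OF assms, of i] step1(2) by (simp add: add.assoc)
    show ?case using other_col[OF a b] by simp
  next
    case (step2 i)
    have a: "col (Xc C (i-1)) (Xc C (i-1+1)) \<noteq> None" using alt_Xc(1)[OF assms, of "i-1"] .
    have b: "col (Xc C (i-1)) (Xc C (i-1+1)) \<noteq> Some (colr (odd i \<noteq> b))"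
      using alt_Xc(2)[OF assms, of "i-1"] step2(2) by (simp add: algebra_simps)
    show ?case using other_col[OF a b] by simp
  qed
qed

definition cyc_fun :: "('a \<Rightarrow> 'a \<Rightarrow> color option) \<Rightarrow> int \<Rightarrow> (int \<Rightarrow> 'a) \<Rightarrow> bool" where
  "cyc_fun col N X \<longleftrightarrow> (\<forall>i. X (i mod N) = X i) \<and> (\<forall>i j. X i = X j \<longrightarrow> i mod N = j mod N)
     \<and> (\<forall>i. col (X i) (X (i+1)) = Some (colr (odd i)))"

lemma Xc_adj:
  assumes ne: "C \<noteq> []" and d: "distinct C"
  shows "cyc_adj C (Xc C i) u \<longleftrightarrow> u = Xc C (i+1) \<or> u = Xc C (i-1)"
proof -
  let ?N = "int (length C)"
  have s: "\<And>k. k < length C \<Longrightarrow> C ! ((k+1) mod length C) = Xc C (int k + 1)"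
  proof -
    fix k assume "k < length C"
    then have "nat (int k mod ?N) = k" by (simp add: zmod_int)
    then show "C ! ((k+1) mod length C) = Xc C (int k + 1)" using Xc_suc[OF ne, of "int k"] by simp
  qed
  have n: "\<And>k. k < length C \<Longrightarrow> C ! k = Xc C (int k)" by (simp add: Xc_nat)
  have "cyc_adj C (Xc C i) u \<longleftrightarrow> (\<exists>k<length C. (Xc C (int k) = Xc C i \<and> Xc C (int k + 1) = u)
      \<or> (Xc C (int k) = u \<and> Xc C (int k + 1) = Xc C i))"
    unfolding cyc_adj_def using s n by (metis (no_types, lifting))
  also have "\<dots> \<longleftrightarrow> u = Xc C (i+1) \<or> u = Xc C (i-1)"
  proof
    assume "\<exists>k<length C. (Xc C (int k) = Xc C i \<and> Xc C (int k + 1) = u)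
      \<or> (Xc C (int k) = u \<and> Xc C (int k + 1) = Xc C i)"
    then obtain k where "(Xc C (int k) = Xc C i \<and> Xc C (int k + 1) = u)
      \<or> (Xc C (int k) = u \<and> Xc C (int k + 1) = Xc C i)" by blast
    then show "u = Xc C (i+1) \<or> u = Xc C (i-1)"
    proof
      assume h: "Xc C (int k) = Xc C i \<and> Xc C (int k + 1) = u"
      then have "int k mod ?N = i mod ?N" using Xc_inj[OF ne d] by blast
      then have "(int k + 1) mod ?N = (i + 1) mod ?N" by (metis mod_add_left_eq)
      then show ?thesis using h Xc_cong by metis
    next
      assume h: "Xc C (int k) = u \<and> Xc C (int k + 1) = Xc C i"
      then have "(int k + 1) mod ?N = i mod ?N" using Xc_inj[OF ne d] by blast
      then have "(int k + 1 - 1) mod ?N = (i - 1) mod ?N" by (metis mod_diff_left_eq)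
      then show ?thesis using h Xc_cong by (metis add_diff_cancel_right')
    qed
  next
    have L: "?N > 0" using ne by simp
    assume "u = Xc C (i+1) \<or> u = Xc C (i-1)"
    then show "\<exists>k<length C. (Xc C (int k) = Xc C i \<and> Xc C (int k + 1) = u)
      \<or> (Xc C (int k) = u \<and> Xc C (int k + 1) = Xc C i)"
    proof
      assume u: "u = Xc C (i+1)"
      let ?k = "nat (i mod ?N)"
      have k: "?k < length C" using L by (simp add: nat_less_iff)
      have "int ?k = i mod ?N" using L by simp
      then have "Xc C (int ?k) = Xc C i" "Xc C (int ?k + 1) = Xc C (i+1)"
        by (auto intro!: Xc_cong simp: mod_add_left_eq)
      then show ?thesis using k u by blast
    next
      assume u: "u = Xc C (i-1)"
      let ?k = "nat ((i - 1) mod ?N)"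
      have k: "?k < length C" using L by (simp add: nat_less_iff)
      have "int ?k = (i - 1) mod ?N" using L by simp
      then have "Xc C (int ?k) = Xc C (i - 1)" "Xc C (int ?k + 1) = Xc C i"
        by (auto intro!: Xc_cong simp: mod_add_left_eq)
      then show ?thesis using k u by blast
    qed
  qed
  finally show ?thesis .
qed




lemma norm_exists:
  assumes ac: "alt_cycle col C" and ev: "even (length C)" and sym: "\<forall>u v. col u v = col v u"
  shows "\<exists>X. cyc_fun col (int (length C)) X \<and> range X = set C \<and>
     (\<forall>i \<kappa>. cyc_nbr col C \<kappa> (X i) = (if colr (odd i) = \<kappa> then X (i+1) else X (i-1)))"
proof -
  let ?N = "int (length C)"
  have ne: "C \<noteq> []" and d: "distinct C" using ac by (auto simp: alt_cycle_def)
  define b where "b = (col (Xc C 0) (Xc C 1) = Some Blue)"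
  define off where "off = (if b then 1 else (0::int))"
  define X where "X i = Xc C (i + off)" for i
  have colX: "col (X i) (X (i+1)) = Some (colr (odd i))" for i
  proof -
    have "col (X i) (X (i+1)) = Some (colr (odd (i + off) \<noteq> b))"
      using Xc_col[OF ac, of "i+off"] unfolding X_def b_def[symmetric] by (simp add: algebra_simps)
    then show ?thesis by (auto simp: off_def)
  qed
  have modX: "X (i mod ?N) = X i" for i
    unfolding X_def by (rule Xc_cong) (simp add: mod_add_left_eq)
  have injX: "X i = X j \<Longrightarrow> i mod ?N = j mod ?N" for i j
  proof -
    assume "X i = X j"
    then have "(i + off) mod ?N = (j + off) mod ?N" unfolding X_def using Xc_inj[OF ne d] by blast
    then show ?thesis by (metis add_diff_cancel_right' mod_diff_left_eq)
  qed
  have rng: "range X = set C"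
  proof
    show "range X \<subseteq> set C" unfolding X_def using Xc_in[OF ne] by auto
    show "set C \<subseteq> range X"
    proof
      fix x assume "x \<in> set C"
      then obtain i where "x = Xc C i" using Xc_surj by metis
      then have "x = X (i - off)" unfolding X_def by simp
      then show "x \<in> range X" by blast
    qed
  qed
  have adj: "cyc_adj C (X i) u \<longleftrightarrow> u = X (i+1) \<or> u = X (i-1)" for i u
  proof -
    have "cyc_adj C (Xc C (i + off)) u \<longleftrightarrow> u = Xc C (i + off + 1) \<or> u = Xc C (i + off - 1)"
      by (rule Xc_adj[OF ne d])
    moreover have "Xc C (i + off + 1) = X (i+1)" "Xc C (i + off - 1) = X (i-1)"
      unfolding X_def by (simp_all add: algebra_simps)
    ultimately show ?thesis unfolding X_def by simp
  qed
  have c2: "col (X i) (X (i-1)) = Some (colr (\<not> odd i))" for i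
    using colX[of "i-1"] sym by simp
  have nbr: "cyc_nbr col C \<kappa> (X i) = (if colr (odd i) = \<kappa> then X (i+1) else X (i-1))" for i \<kappa>
  proof (cases "colr (odd i) = \<kappa>")
    case True
    have "(THE u. cyc_adj C (X i) u \<and> col (X i) u = Some \<kappa>) = X (i+1)"
    proof (rule the_equality)
      show "cyc_adj C (X i) (X (i + 1)) \<and> col (X i) (X (i + 1)) = Some \<kappa>"
        using adj[of i "X (i+1)"] colX[of i] True by simp
      fix u assume u: "cyc_adj C (X i) u \<and> col (X i) u = Some \<kappa>"
      show "u = X (i+1)"
      proof (rule ccontr)
        assume "u \<noteq> X (i+1)"
        then have "u = X (i - 1)" using u adj[of i u] by simp
        then show False using u c2[of i] True by simp (metis colr_inj)
      qed
    qed
    then show ?thesis unfolding cyc_nbr_def using True by simp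
  next
    case False
    have k: "\<kappa> = colr (\<not> odd i)" using False by (cases \<kappa>; cases "odd i") (auto simp: colr_def)
    have "(THE u. cyc_adj C (X i) u \<and> col (X i) u = Some \<kappa>) = X (i-1)"
    proof (rule the_equality)
      show "cyc_adj C (X i) (X (i - 1)) \<and> col (X i) (X (i - 1)) = Some \<kappa>"
        using adj[of i "X (i-1)"] c2[of i] k by simp
      fix u assume u: "cyc_adj C (X i) u \<and> col (X i) u = Some \<kappa>"
      show "u = X (i-1)"
      proof (rule ccontr)
        assume "u \<noteq> X (i-1)"
        then have "u = X (i + 1)" using u adj[of i u] by simp
        then show False using u colX[of i] False by simp
      qed
    qed
    then show ?thesis unfolding cyc_nbr_def using False by simp
  qed
  show ?thesis
  proof (rule exI[of _ X], intro conjI allI)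
    show "cyc_fun col ?N X" unfolding cyc_fun_def
      by (intro conjI allI impI modX colX; erule injX)
  qed (fact rng, fact nbr)
qed




definition sg :: "('a \<Rightarrow> 'a \<Rightarrow> color option) \<Rightarrow> (int \<Rightarrow> 'a) \<Rightarrow> (int \<Rightarrow> 'a) \<Rightarrow> int \<Rightarrow> int \<Rightarrow> bool" where
  "sg col X Y i j = (col (X i) (Y j) \<noteq> Some (colr (odd i)))"

lemma per_const:
  fixes P :: "int \<Rightarrow> bool"
  assumes st: "\<And>t. P t \<Longrightarrow> P (t+1)" and pr: "\<And>t. P (t + p) = P t" and p: "p > 0"
  shows "P t = P 0"
proof -
  have up: "P t \<Longrightarrow> P (t + int s)" for t s
    by (induct s) (auto simp: algebra_simps dest: st)
  have eq: "P (t+1) = P t" for t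
  proof
    assume "P (t+1)"
    then have "P (t + 1 + int (nat (p - 1)))" by (rule up)
    also have "t + 1 + int (nat (p - 1)) = t + p" using p by simp
    finally show "P t" using pr by simp
  qed (rule st)
  show ?thesis
  proof (induct t rule: int_induct[where k=0])
    case base then show ?case by simp
  next
    case (step1 i) then show ?case using eq[of i] by simp
  next
    case (step2 i) then show ?case using eq[of "i-1"] by simp
  qed
qed

lemma cf_per: "cyc_fun col N X \<Longrightarrow> X (a + N * q) = X a"
  unfolding cyc_fun_def by (metis mod_mult_self1 mult.commute)

lemma inv_from_ngp:
  fixes X Y :: "int \<Rightarrow> 'a"
  assumes cX: "cyc_fun col (2 * int n) X" and rX: "range X = set C1"
    and nX: "\<forall>i \<kappa>. cyc_nbr col C1 \<kappa> (X i) = (if colr (odd i) = \<kappa> then X (i+1) else X (i-1))"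
    and cY: "cyc_fun col (2 * int m) Y" and rY: "range Y = set C2"
    and nY: "\<forall>i \<kappa>. cyc_nbr col C2 \<kappa> (Y i) = (if colr (odd i) = \<kappa> then Y (i+1) else Y (i-1))"
    and nm: "n > 0" "m > 0"
    and ngp: "\<not> has_good_pair col C1 C2"
    and ne: "\<forall>i j. col (X i) (Y j) \<noteq> None"
  shows "even (i + j) \<Longrightarrow> sg col X Y (i + t) (j + t) = sg col X Y i j"
    and "odd (i + j) \<Longrightarrow> sg col X Y (i + t) (j - t) = sg col X Y i j"
proof -
  have base: "col (X (i+1)) (Y j') \<noteq> Some (colr (odd i))"
    if "col (X i) (Y j) = Some (colr (odd i))" "cyc_nbr col C2 (colr (odd i)) (Y j) = Y j'" for i j j'
  proof
    assume h: "col (X (i+1)) (Y j') = Some (colr (odd i))"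
    have "X i \<in> set C1" "Y j \<in> set C2" using rX rY by auto
    moreover have "cyc_nbr col C1 (colr (odd i)) (X i) = X (i+1)" using nX by simp
    ultimately show False using ngp that h unfolding has_good_pair_def by metis
  qed
  have flip: "col (X a) (Y b) \<noteq> Some (colr (odd (a - 1))) \<Longrightarrow> \<not> sg col X Y a b" for a b
    using other_col[OF ne[rule_format, of a b]] unfolding sg_def by auto
  define p where "p = 2 * int n * (2 * int m)"
  have p: "p > 0" using nm by (simp add: p_def)
  have pX: "X (a + p) = X a" for a using cf_per[OF cX, of a "2 * int m"] by (simp add: p_def)
  have pY: "Y (a + p) = Y a" for a using cf_per[OF cY, of a "2 * int n"] by (simp add: p_def algebra_simps)
  have pY': "Y (a - p) = Y a" for a using cf_per[OF cY, of a "- 2 * int n"] by (simp add: p_def algebra_simps)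
  have evp: "even p" by (simp add: p_def)
  show "sg col X Y (i + t) (j + t) = sg col X Y i j" if ev: "even (i + j)"
  proof -
    let ?P = "\<lambda>t. \<not> sg col X Y (i + t) (j + t)"
    have st: "?P t \<Longrightarrow> ?P (t+1)" for t
    proof -
      assume "?P t"
      then have c: "col (X (i+t)) (Y (j+t)) = Some (colr (odd (i+t)))" unfolding sg_def by simp
      have "cyc_nbr col C2 (colr (odd (i+t))) (Y (j+t)) = Y (j+t+1)" using nY ev by simp
      from base[OF c this] show "?P (t+1)" using flip by (simp add: algebra_simps)
    qed
    have pr: "?P (t + p) = ?P t" for t
      using pX[of "i+t"] pY[of "j+t"] evp unfolding sg_def by (simp add: algebra_simps)
    show ?thesis using per_const[of ?P p t, OF st pr p] by simp
  qed
  show "sg col X Y (i + t) (j - t) = sg col X Y i j" if od: "odd (i + j)"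
  proof -
    let ?P = "\<lambda>t. \<not> sg col X Y (i + t) (j - t)"
    have st: "?P t \<Longrightarrow> ?P (t+1)" for t
    proof -
      assume "?P t"
      then have c: "col (X (i+t)) (Y (j-t)) = Some (colr (odd (i+t)))" unfolding sg_def by simp
      have "odd (i+t) \<noteq> odd (j-t)" using od by presburger
      then have "colr (odd (j-t)) \<noteq> colr (odd (i+t))" by (simp only: colr_inj)
      then have "cyc_nbr col C2 (colr (odd (i+t))) (Y (j-t)) = Y (j-t-1)"
        using nY[rule_format, of "colr (odd (i+t))" "j-t"] by (simp only: if_False)
      from base[OF c this] show "?P (t+1)" using flip by (simp add: algebra_simps)
    qed
    have pr: "?P (t + p) = ?P t" for t
      using pX[of "i+t"] pY'[of "j-t"] evp unfolding sg_def by (simp add: algebra_simps)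
    show ?thesis using per_const[of ?P p t, OF st pr p] by simp
  qed
qed




lemma mod_close: fixes x y N :: int assumes "x mod N = y mod N" "\<bar>x - y\<bar> < N" shows "x = y"
proof -
  have "N dvd x - y" using assms(1) by (simp add: mod_eq_dvd_iff)
  then obtain z where z: "x - y = N * z" by (auto elim: dvdE)
  have N: "N > 0" using assms(2) by linarith
  show ?thesis
  proof (cases "z = 0")
    case False
    then have "\<bar>z\<bar> \<ge> 1" by linarith
    then have "N * \<bar>z\<bar> \<ge> N" using N by (simp add: mult_le_cancel_left1)
    then show ?thesis using assms(2) z N by (simp add: abs_mult)
  qed (use z in simp)
qed

lemma alt_from_fun:
  fixes f :: "nat \<Rightarrow> 'a" and a :: int
  assumes ev: "even L" and L: "L \<ge> 4" and inj: "inj_on f {..<L}"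
    and cl: "\<forall>k<L. col (f k) (f (Suc k mod L)) = Some (colr (odd (a + int k)))"
  shows "alt_cycle col (map f [0..<L])"
  unfolding alt_cycle_def
proof (intro conjI allI impI)
  show "3 \<le> length (map f [0..<L])" using L by simp
  show "distinct (map f [0..<L])" using inj by (simp add: distinct_map atLeast0LessThan)
  fix i assume i: "i < length (map f [0..<L])"
  then have i': "i < L" by simp
  have L0: "L > 0" using L by simp
  have m1: "(i + 1) mod L < L" using L0 by simp
  have m2: "((i + 1) mod L + 1) mod L = (i + 2) mod L" by (simp add: mod_Suc_eq)
  have c1: "col (f i) (f ((i+1) mod L)) = Some (colr (odd (a + int i)))" using cl i' by simp
  have c2: "col (f ((i+1) mod L)) (f ((i+2) mod L)) = Some (colr (odd (a + int ((i+1) mod L))))"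
    using cl[rule_format, OF m1] m2 by simp
  have par: "odd ((i+1) mod L) = odd (i + 1)"
  proof -
    have "((i+1) mod L) mod 2 = (i+1) mod 2" using ev by (simp add: mod_mod_cancel)
    then show ?thesis unfolding even_iff_mod_2_eq_zero by simp
  qed
  have nth1: "map f [0..<L] ! i = f i" using i' by simp
  have nth2: "map f [0..<L] ! ((i+1) mod length (map f [0..<L])) = f ((i+1) mod L)" using m1 by simp
  have nth3: "map f [0..<L] ! ((i+2) mod length (map f [0..<L])) = f ((i+2) mod L)" using L0 by simp
  show "col (map f [0..<L] ! i) (map f [0..<L] ! ((i + 1) mod length (map f [0..<L]))) \<noteq> None"
    using nth1 nth2 c1 by simp
  have "odd (a + int ((i+1) mod L)) \<noteq> odd (a + int i)" using par by simp
  then show "col (map f [0..<L] ! i) (map f [0..<L] ! ((i + 1) mod length (map f [0..<L]))) \<noteq>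
    col (map f [0..<L] ! ((i + 1) mod length (map f [0..<L]))) (map f [0..<L] ! ((i + 2) mod length (map f [0..<L])))"
    using nth1 nth2 nth3 c1 c2 by simp
qed




lemma cf_inj:
  assumes "cyc_fun col N X" "X i = X j" shows "i mod N = j mod N"
proof -
  have "\<forall>i j. X i = X j \<longrightarrow> i mod N = j mod N"
    using assms(1) unfolding cyc_fun_def by (rule conjunct1[OF conjunct2])
  then show ?thesis using assms(2) by blast
qed

lemma core:
  fixes X Y :: "int \<Rightarrow> 'a" and n m l :: nat
  assumes cX: "cyc_fun col (2 * int n) X" and cY: "cyc_fun col (2 * int m) Y"
    and dj: "\<forall>i j. X i \<noteq> Y j" and ne: "\<forall>i j. col (X i) (Y j) \<noteq> None"
    and sym: "\<forall>u v. col u v = col v u"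
    and anti: "\<forall>i j t. odd (i+j) \<longrightarrow> sg col X Y (i+t) (j-t) = sg col X Y i j"
    and H: "\<exists>i0 j0 e. odd (i0+j0) \<and> (e = 1 \<or> e = -1) \<and> \<not> sg col X Y i0 j0 \<and> sg col X Y i0 (j0 + 2*e)"
    and n1: "n \<ge> 1" and l: "even l" "n + 3 \<le> l" "l \<le> 2*m"
  shows "\<forall>v \<in> range X \<union> range Y. \<exists>xs. alt_cycle col xs \<and> length xs = l \<and> v \<in> set xs"
proof -
  obtain i0 j0 e where od: "odd (i0+j0)" and e: "e = 1 \<or> e = -1" and s0: "\<not> sg col X Y i0 j0"
    and s1: "sg col X Y i0 (j0 + 2*e)" using H by blast
  define h where "h = l div 2"
  have lh: "l = 2 * h" using l(1) by (simp add: h_def)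
  define r where "r = (int h - 1 - e) mod int n"
  define k1 where "k1 = (if r = 0 then n else nat r)"
  have rr: "0 \<le> r" "r < int n" using n1 by (simp_all add: r_def)
  have k1: "1 \<le> k1" "k1 \<le> n" using rr by (auto simp: k1_def)
  have "int n dvd (int h - 1 - e - int k1)"
  proof (cases "r = 0")
    case True
    then have "int n dvd (int h - 1 - e)" by (simp add: r_def mod_eq_0_iff_dvd)
    then show ?thesis using True by (simp add: k1_def)
  next
    case False
    then have "int k1 = r" using rr by (simp add: k1_def)
    then show ?thesis by (simp add: r_def mod_eq_dvd_iff[symmetric] mod_diff_eq)
  qed
  then obtain q where q: "int h - 1 - e - int k1 = int n * q" by (auto elim: dvdE)
  define k2 where "k2 = l - 2 - k1"
  have k2: "k2 \<ge> 1" "l = k1 + k2 + 2" using k1 l by (auto simp: k2_def)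
  have del: "int k2 = int k1 + 2 * e + 2 * int n * q" using q k2(2) lh by linarith
  have L4: "l \<ge> 4" using l n1 by simp
  have main: "alt_cycle col (map (\<lambda>k. if k \<le> k1 then X (i0 + t - int k1 + int k)
      else Y (j0 - t + int k - int k1 - 1)) [0..<l])" for t
  proof -
    define a where "a = i0 + t - int k1"
    define c where "c = j0 - t"
    define f where "f k = (if k \<le> k1 then X (a + int k) else Y (c + int k - int k1 - 1))" for k
    have ff: "(\<lambda>k. if k \<le> k1 then X (i0 + t - int k1 + int k)
      else Y (j0 - t + int k - int k1 - 1)) = f" by (simp add: f_def a_def c_def fun_eq_iff)
    have cXc: "col (X i) (X (i+1)) = Some (colr (odd i))" for i using cX by (simp add: cyc_fun_def)
    have cYc: "col (Y i) (Y (i+1)) = Some (colr (odd i))" for i using cY by (simp add: cyc_fun_def)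
    have cl: "\<forall>k<l. col (f k) (f (Suc k mod l)) = Some (colr (odd (a + int k)))"
    proof (intro allI impI)
      fix k assume k: "k < l"
      consider "k < k1" | "k = k1" | "k1 < k \<and> k < l - 1" | "k = l - 1" using k by linarith
      then show "col (f k) (f (Suc k mod l)) = Some (colr (odd (a + int k)))"
      proof cases
        case 1
        then have "Suc k mod l = Suc k" using k1 k2 by simp
        moreover have "f (Suc k) = X (a + int k + 1)" using 1 by (simp add: f_def algebra_simps)
        moreover have "f k = X (a + int k)" using 1 by (simp add: f_def)
        ultimately show ?thesis using cXc[of "a + int k"] by simp
      next
        case 2
        then have "Suc k mod l = Suc k1" using k2 by simp
        then have fs: "f (Suc k mod l) = Y c" by (simp add: f_def)
        have "sg col X Y (i0 + t) (j0 - t) = sg col X Y i0 j0" using anti od by blast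
        then have "col (X (i0 + t)) (Y (j0 - t)) = Some (colr (odd (i0 + t)))" using s0 by (simp add: sg_def)
        then show ?thesis using 2 fs by (simp add: f_def a_def c_def)
      next
        case 3
        then have "Suc k < l" by linarith
        then have "Suc k mod l = Suc k" by simp
        moreover have "odd (c + int k - int k1 - 1) = odd (a + int k)" using od
          unfolding a_def c_def by presburger
        ultimately show ?thesis using 3 cYc[of "c + int k - int k1 - 1"] by (simp add: f_def algebra_simps)
      next
        case 4
        then have "Suc k mod l = 0" using L4 by simp
        then have fs: "f (Suc k mod l) = X a" by (simp add: f_def)
        have fk: "f k = Y (c + int k2)" using 4 k2 by (simp add: f_def)
        have sp: "sg col X Y (i0 + (t - int k1 - 2 * int n * q)) (j0 + 2 * e - (t - int k1 - 2 * int n * q))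
           = sg col X Y i0 (j0 + 2*e)" using anti od by (metis odd_add even_mult_iff even_numeral)
        have x1: "i0 + (t - int k1 - 2 * int n * q) = a + 2 * int n * (- q)" by (simp add: a_def algebra_simps)
        have y1: "j0 + 2 * e - (t - int k1 - 2 * int n * q) = c + int k2" using del by (simp add: c_def algebra_simps)
        have "X (a + 2 * int n * (- q)) = X a" using cf_per[OF cX, of a "- q"] by simp
        moreover have "odd (a + 2 * int n * (- q)) = odd a" by simp
        ultimately have "sg col X Y a (c + int k2)" using sp s1 x1 y1 unfolding sg_def by simp
        then have "col (X a) (Y (c + int k2)) \<noteq> Some (colr (odd a))" unfolding sg_def .
        then have "col (X a) (Y (c + int k2)) = Some (colr (\<not> odd a))"
          by (rule other_col[OF ne[rule_format, of a "c + int k2"]])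
        moreover have "odd (a + int k) = (\<not> odd a)" using 4 l(1) L4 by (simp add: of_nat_diff)
        ultimately show ?thesis using fs fk sym by simp
      qed
    qed
    have inj: "inj_on f {..<l}"
    proof (rule inj_onI)
      fix k k' assume kk: "k \<in> {..<l}" "k' \<in> {..<l}" and eq: "f k = f k'"
      show "k = k'"
      proof (cases "k \<le> k1")
        case True note T = this
        show ?thesis
        proof (cases "k' \<le> k1")
          case True
          then have "X (a + int k) = X (a + int k')" using T eq by (simp add: f_def)
          then have "(a + int k) mod (2 * int n) = (a + int k') mod (2 * int n)" by (rule cf_inj[OF cX])
          moreover have "\<bar>(a + int k) - (a + int k')\<bar> < 2 * int n" using T True k1 by linarith
          ultimately have "a + int k = a + int k'" by (rule mod_close)
          then show ?thesis by simp
        next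
          case False
          then have "X (a + int k) = Y (c + int k' - int k1 - 1)" using T eq by (simp add: f_def)
          with dj[rule_format, of "a + int k" "c + int k' - int k1 - 1"] show ?thesis by simp
        qed
      next
        case False note F = this
        show ?thesis
        proof (cases "k' \<le> k1")
          case True
          then have "X (a + int k') = Y (c + int k - int k1 - 1)" using F eq by (simp add: f_def)
          with dj[rule_format, of "a + int k'" "c + int k - int k1 - 1"] show ?thesis by simp
        next
          case False
          then have "Y (c + int k - int k1 - 1) = Y (c + int k' - int k1 - 1)" using F eq by (simp add: f_def)
          then have "(c + int k - int k1 - 1) mod (2 * int m) = (c + int k' - int k1 - 1) mod (2 * int m)"
            by (rule cf_inj[OF cY])
          moreover have "\<bar>(c + int k - int k1 - 1) - (c + int k' - int k1 - 1)\<bar> < 2 * int m"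
          proof -
            have "k < l" "k' < l" using kk by auto
            then show ?thesis using F False l(3) by linarith
          qed
          ultimately have "c + int k - int k1 - 1 = c + int k' - int k1 - 1" by (rule mod_close)
          then show ?thesis by simp
        qed
      qed
    qed
    show ?thesis unfolding ff by (rule alt_from_fun[OF l(1) L4 inj cl])
  qed
  have mem: "\<exists>xs. alt_cycle col xs \<and> length xs = l \<and> v \<in> set xs"
    if "v = (if k \<le> k1 then X (i0 + t - int k1 + int k) else Y (j0 - t + int k - int k1 - 1))" "k < l" for v t k
  proof -
    let ?xs = "map (\<lambda>k. if k \<le> k1 then X (i0 + t - int k1 + int k)
        else Y (j0 - t + int k - int k1 - 1)) [0..<l]"
    have m: "?xs ! k \<in> set ?xs" by (rule nth_mem) (use that in simp)
    have e: "?xs ! k = v" using that by simp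
    have vin: "v \<in> set ?xs" using m by (simp only: e)
    show ?thesis by (intro exI[of _ ?xs] conjI main vin) simp
  qed
  show ?thesis
  proof
    fix v assume "v \<in> range X \<union> range Y"
    then show "\<exists>xs. alt_cycle col xs \<and> length xs = l \<and> v \<in> set xs"
    proof
      assume "v \<in> range X"
      then obtain v0 where v0: "v = X v0" by auto
      show ?thesis by (rule mem[of v 0 "v0 + int k1 - i0"]) (use v0 L4 in simp_all)
    next
      assume "v \<in> range Y"
      then obtain w0 where w0: "v = Y w0" by auto
      have kl: "Suc k1 < l" using k2 by simp
      show ?thesis by (rule mem[of v "Suc k1" "j0 - w0"]) (use w0 kl in simp_all)
    qed
  qed
qed




lemma const_lemma:
  assumes anti: "\<forall>i j t. odd (i+j) \<longrightarrow> sg col X Y (i+t) (j-t) = sg col X Y i j"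
    and nH: "\<not> (\<exists>i0 j0 e. odd (i0+j0) \<and> (e = 1 \<or> e = -1) \<and> \<not> sg col X Y i0 j0 \<and> sg col X Y i0 (j0 + 2*e))"
  shows "\<forall>i j. odd (i+j) \<longrightarrow> sg col X Y i j = sg col X Y 0 1"
proof (intro allI impI)
  fix i j :: int assume od: "odd (i+j)"
  have step: "sg col X Y i' (j' + 2) = sg col X Y i' j'" if "odd (i' + j')" for i' j'
  proof -
    have o2: "odd (i' + (j' + 2))" using that by simp
    have "\<not> (\<not> sg col X Y i' j' \<and> sg col X Y i' (j' + 2*1))" using nH that by blast
    moreover have "\<not> (\<not> sg col X Y i' (j'+2) \<and> sg col X Y i' (j' + 2 + 2*(-1)))" using nH o2 by blast
    ultimately show ?thesis by auto
  qed
  have Q: "sg col X Y 0 (1 + 2*s) = sg col X Y 0 1" for s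
  proof (induct s rule: int_induct[where k=0])
    case base then show ?case by simp
  next
    case (step1 s)
    have "sg col X Y 0 (1 + 2*s + 2) = sg col X Y 0 (1 + 2*s)" by (rule step) simp
    then show ?case using step1 by (simp add: algebra_simps)
  next
    case (step2 s)
    have "sg col X Y 0 (1 + 2*(s-1) + 2) = sg col X Y 0 (1 + 2*(s-1))" by (rule step) simp
    then show ?case using step2 by (simp add: algebra_simps)
  qed
  have "sg col X Y (i + (-i)) (j - (-i)) = sg col X Y i j" using anti od by blast
  then have "sg col X Y i j = sg col X Y 0 (i + j)" by (simp add: algebra_simps)
  also have "i + j = 1 + 2 * ((i + j - 1) div 2)" using od by presburger
  finally show "sg col X Y i j = sg col X Y 0 1" using Q by simp
qed

lemma cf_refl:
  assumes cY: "cyc_fun col M Y" and sym: "\<forall>u v. col u v = col v u"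
  shows "cyc_fun col M (\<lambda>j. Y (1 - j))"
  unfolding cyc_fun_def
proof (intro conjI allI impI)
  have md: "Y (a mod M) = Y a" for a using cY unfolding cyc_fun_def by blast
  fix i
  show "Y (1 - i mod M) = Y (1 - i)"
    by (metis md mod_diff_right_eq)
  have "col (Y (-i)) (Y (-i + 1)) = Some (colr (odd (-i)))" using cY unfolding cyc_fun_def by blast
  then show "col (Y (1 - i)) (Y (1 - (i + 1))) = Some (colr (odd i))" using sym by (simp add: algebra_simps)
next
  fix i j assume "Y (1 - i) = Y (1 - j)"
  then have "(1 - i) mod M = (1 - j) mod M" by (rule cf_inj[OF cY])
  then have "M dvd (1 - i) - (1 - j)" by (simp add: mod_eq_dvd_iff)
  then have "M dvd i - j" by (metis dvd_minus_iff minus_diff_eq diff_diff_eq2 diff_diff_cancel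
      add_diff_cancel_left' diff_add_cancel)
  then show "i mod M = j mod M" by (simp add: mod_eq_dvd_iff)
qed



lemma main_lemma:
  fixes C1 C2 :: "'a list" and n m :: nat
  assumes sym: "\<forall>u v. col u v = col v u"
    and ac1: "alt_cycle col C1" and ac2: "alt_cycle col C2"
    and len1: "length C1 = 2 * n" and len2: "length C2 = 2 * m"
    and dj: "set C1 \<inter> set C2 = {}"
    and ext: "\<forall>u\<in>set C1. \<forall>w\<in>set C2. col u w \<noteq> None"
    and ngp: "\<not> has_good_pair col C1 C2"
    and ns1: "\<exists>v\<in>set C1. non_singular col v (set C2)"
    and ns2: "\<exists>w\<in>set C2. non_singular col w (set C1)"
    and nm: "n \<le> m"
  shows "\<forall>v\<in>set C1 \<union> set C2. \<forall>l. even l \<and> 4 * n \<le> l \<and> l \<le> 2 * m \<longrightarrow>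
           (\<exists>xs. alt_cycle col xs \<and> length xs = l \<and> v \<in> set xs)"
proof -
  have n0: "n \<ge> 1" using ac1 len1 by (auto simp: alt_cycle_def)
  have m0: "m \<ge> 1" using ac2 len2 by (auto simp: alt_cycle_def)
  obtain X where cX0: "cyc_fun col (int (length C1)) X" and rX: "range X = set C1"
    and nX: "\<forall>i \<kappa>. cyc_nbr col C1 \<kappa> (X i) = (if colr (odd i) = \<kappa> then X (i+1) else X (i-1))"
    using norm_exists[OF ac1 _ sym] len1 by auto
  obtain Y where cY0: "cyc_fun col (int (length C2)) Y" and rY: "range Y = set C2"
    and nY: "\<forall>i \<kappa>. cyc_nbr col C2 \<kappa> (Y i) = (if colr (odd i) = \<kappa> then Y (i+1) else Y (i-1))"
    using norm_exists[OF ac2 _ sym] len2 by auto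
  have cX: "cyc_fun col (2 * int n) X" using cX0 len1 by simp
  have cY: "cyc_fun col (2 * int m) Y" using cY0 len2 by simp
  have djXY: "\<forall>i j. X i \<noteq> Y j"
  proof (intro allI)
    fix i j
    have "X i \<in> set C1" "Y j \<in> set C2" using rX rY by auto
    then show "X i \<noteq> Y j" using dj by auto
  qed
  have ne: "\<forall>i j. col (X i) (Y j) \<noteq> None"
  proof (intro allI)
    fix i j
    have "X i \<in> set C1" "Y j \<in> set C2" using rX rY by auto
    then show "col (X i) (Y j) \<noteq> None" using ext by blast
  qed
  have diag: "\<forall>i j t. even (i+j) \<longrightarrow> sg col X Y (i+t) (j+t) = sg col X Y i j"
    using inv_from_ngp(1)[OF cX rX nX cY rY nY _ _ ngp ne] n0 m0 by simp
  have anti: "\<forall>i j t. odd (i+j) \<longrightarrow> sg col X Y (i+t) (j-t) = sg col X Y i j"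
    using inv_from_ngp(2)[OF cX rX nX cY rY nY _ _ ngp ne] n0 m0 by simp
  define Y' where "Y' j = Y (1 - j)" for j
  have cY': "cyc_fun col (2 * int m) Y'" unfolding Y'_def by (rule cf_refl[OF cY sym])
  have sgY': "sg col X Y' i j = sg col X Y i (1 - j)" for i j by (simp add: sg_def Y'_def)
  have djXY': "\<forall>i j. X i \<noteq> Y' j" using djXY by (simp add: Y'_def)
  have neY': "\<forall>i j. col (X i) (Y' j) \<noteq> None" using ne by (simp add: Y'_def)
  have antiY': "\<forall>i j t. odd (i+j) \<longrightarrow> sg col X Y' (i+t) (j-t) = sg col X Y' i j"
  proof (intro allI impI)
    fix i j t :: int assume "odd (i+j)"
    then have "even (i + (1 - j))" by presburger
    then have "sg col X Y (i+t) (1 - j + t) = sg col X Y i (1 - j)" using diag by blast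
    then show "sg col X Y' (i+t) (j-t) = sg col X Y' i j" by (simp add: sgY' algebra_simps)
  qed
  have rY': "range Y' = range Y"
  proof
    show "range Y' \<subseteq> range Y" by (auto simp: Y'_def)
    show "range Y \<subseteq> range Y'"
    proof
      fix y assume "y \<in> range Y"
      then obtain j where "y = Y j" by auto
      then have "y = Y' (1 - j)" by (simp add: Y'_def)
      then show "y \<in> range Y'" by (rule range_eqI)
    qed
  qed
  have goal: "\<forall>v \<in> range X \<union> range Y. \<exists>xs. alt_cycle col xs \<and> length xs = l \<and> v \<in> set xs"
    if l: "even l" "4 * n \<le> l" "l \<le> 2 * m" for l
  proof -
    have l3: "n + 3 \<le> l" using l n0 by simp
    show ?thesis
    proof (cases "\<exists>i0 j0 e. odd (i0+j0) \<and> (e = 1 \<or> e = -1) \<and> \<not> sg col X Y i0 j0 \<and> sg col X Y i0 (j0 + 2*e)")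
      case True
      show ?thesis by (rule core[OF cX cY djXY ne sym anti True n0 l(1) l3 l(3)])
    next
      case F1: False
      show ?thesis
      proof (cases "\<exists>i0 j0 e. odd (i0+j0) \<and> (e = 1 \<or> e = -1) \<and> \<not> sg col X Y' i0 j0 \<and> sg col X Y' i0 (j0 + 2*e)")
        case True
        from core[OF cX cY' djXY' neY' sym antiY' True n0 l(1) l3 l(3)] show ?thesis
          using rY' by simp
      next
        case F2: False
        have cb: "\<forall>i j. odd (i+j) \<longrightarrow> sg col X Y i j = sg col X Y 0 1" by (rule const_lemma[OF anti F1])
        have ca': "\<forall>i j. odd (i+j) \<longrightarrow> sg col X Y' i j = sg col X Y' 0 1" by (rule const_lemma[OF antiY' F2])
        define b where "b = sg col X Y 0 1"
        define a where "a = sg col X Y' 0 1"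
        have val: "sg col X Y i j = (if odd (i + j) then b else a)" for i j
        proof (cases "odd (i+j)")
          case True
          then have "sg col X Y i j = b" using cb unfolding b_def by blast
          then show ?thesis using True by simp
        next
          case False
          then have "odd (i + (1 - j))" by presburger
          then have "sg col X Y' i (1 - j) = a" using ca' unfolding a_def by blast
          then show ?thesis using False by (simp add: sgY')
        qed
        have sgR: "sg col X Y i j = odd i" if "col (X i) (Y j) = Some Red" for i j
          using that by (simp add: sg_def colr_def)
        have sgB: "sg col X Y i j = (\<not> odd i)" if "col (X i) (Y j) = Some Blue" for i j
          using that by (simp add: sg_def colr_def)
        obtain v where v: "v \<in> set C1" and "non_singular col v (set C2)" using ns1 by blast
        then obtain w1 w2 where w: "w1 \<in> set C2" "w2 \<in> set C2" "col v w1 = Some Red" "col v w2 = Some Blue"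
          unfolding non_singular_def by blast
        have "v \<in> range X" using v by (simp only: rX)
        then obtain p where p: "v = X p" by (rule rangeE)
        have "w1 \<in> range Y" using w(1) by (simp only: rY)
        then obtain j1 where j1: "w1 = Y j1" by (rule rangeE)
        have "w2 \<in> range Y" using w(2) by (simp only: rY)
        then obtain j2 where j2: "w2 = Y j2" by (rule rangeE)
        have "sg col X Y p j1 \<noteq> sg col X Y p j2" using sgR[of p j1] sgB[of p j2] w p j1 j2 by simp
        note ne12 = this
        have ab: "a \<noteq> b"
        proof
          assume "a = b"
          then have "sg col X Y p j1 = sg col X Y p j2" using val[of p j1] val[of p j2] by simp
          with ne12 show False by simp
        qed
        obtain u where u: "u \<in> set C2" and "non_singular col u (set C1)" using ns2 by blast
        then obtain x1 x2 where x: "x1 \<in> set C1" "x2 \<in> set C1" "col u x1 = Some Red" "col u x2 = Some Blue"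
          unfolding non_singular_def by blast
        have "u \<in> range Y" using u by (simp only: rY)
        then obtain q where q: "u = Y q" by (rule rangeE)
        have "x1 \<in> range X" using x(1) by (simp only: rX)
        then obtain i1 where i1: "x1 = X i1" by (rule rangeE)
        have "x2 \<in> range X" using x(2) by (simp only: rX)
        then obtain i2 where i2: "x2 = X i2" by (rule rangeE)
        have r1: "sg col X Y i1 q = odd i1" using sgR[of i1 q] x q i1 sym by simp
        have r2: "sg col X Y i2 q = (\<not> odd i2)" using sgB[of i2 q] x q i2 sym by simp
        have "False" using r1 r2 val[of i1 q] val[of i2 q] ab
          by (cases "odd q"; cases "odd i1"; cases "odd i2") auto
        then show ?thesis ..
      qed
    qed
  qed
  show ?thesis
  proof (intro ballI allI impI)
    fix v l assume v: "v \<in> set C1 \<union> set C2" and l: "even l \<and> 4 * n \<le> l \<and> l \<le> 2 * m"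
    have "v \<in> range X \<union> range Y" using v by (simp only: rX rY)
    moreover have "\<forall>v \<in> range X \<union> range Y. \<exists>xs. alt_cycle col xs \<and> length xs = l \<and> v \<in> set xs"
      using l by (intro goal) auto
    ultimately show "\<exists>xs. alt_cycle col xs \<and> length xs = l \<and> v \<in> set xs" by (rule bspec[rotated])
  qed
qed





lemma alt_transfer:
  assumes ac: "alt_cycle col1 C" and ag: "\<forall>u\<in>set C. \<forall>v\<in>set C. col u v = col1 u v"
  shows "alt_cycle col C"
proof -
  have e: "col (C!i) (C!j) = col1 (C!i) (C!j)" if "i < length C" "j < length C" for i j
    using ag nth_mem that by blast
  have L: "length C > 0" using ac by (auto simp: alt_cycle_def)
  have m1: "Suc i mod length C < length C" for i using L by simp
  have m2: "Suc (Suc i) mod length C < length C" for i using L by simp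
  have e1: "col (C!i) (C!(Suc i mod length C)) = col1 (C!i) (C!(Suc i mod length C))" if "i < length C" for i
    using e[OF that m1] .
  have e2: "col (C!(Suc i mod length C)) (C!(Suc (Suc i) mod length C)) =
      col1 (C!(Suc i mod length C)) (C!(Suc (Suc i) mod length C))" for i
    using e[OF m1 m2] .
  show ?thesis using ac unfolding alt_cycle_def
    by (simp add: e1 e2)
qed

lemma ngp_swap:
  assumes sym: "\<forall>u v. col u v = col v u" and h: "has_good_pair col C2 C1"
  shows "has_good_pair col C1 C2"
proof -
  obtain w v c where w: "w \<in> set C2" and v: "v \<in> set C1" and c1: "col w v = Some c"
    and c2: "col (cyc_nbr col C2 c w) (cyc_nbr col C1 c v) = Some c"
    using h unfolding has_good_pair_def by blast
  have "col v w = Some c" using c1 sym by simp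
  moreover have "col (cyc_nbr col C1 c v) (cyc_nbr col C2 c w) = Some c" using c2 sym by simp
  ultimately show ?thesis unfolding has_good_pair_def using v w by blast
qed

theorem proposition3p12:
  fixes V1 V2 V :: "'a set"
    and col1 col2 col :: "'a \<Rightarrow> 'a \<Rightarrow> color option"
    and C1 C2 :: "'a list" and n m :: nat
  assumes "cgraph V1 col1" and "cgraph V2 col2" and "V1 \<inter> V2 = {}"
    and "ham_alt_cycle V1 col1 C1" and "length C1 = 2 * n"
    and "ham_alt_cycle V2 col2 C2" and "length C2 = 2 * m"
    and "in_colored_sum V col V1 col1 V2 col2"
    and "\<not> has_good_pair col C1 C2"
    and "\<exists>v\<in>set C1. non_singular col v (set C2)"
    and "\<exists>w\<in>set C2. non_singular col w (set C1)"
  shows "\<forall>v\<in>V. \<forall>l. even l \<and> 4 * min n m \<le> l \<and> l \<le> 2 * max n m \<longrightarrow>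
           (\<exists>xs. alt_cycle col xs \<and> length xs = l \<and> v \<in> set xs)"
proof -
  note A = assms
  have sym: "\<forall>u v. col u v = col v u" using A(8) unfolding in_colored_sum_def cgraph_def by blast
  have VV: "V = V1 \<union> V2" using A(8) unfolding in_colored_sum_def by blast
  have s1: "set C1 = V1" and a1: "alt_cycle col1 C1" using A(4) unfolding ham_alt_cycle_def by auto
  have s2: "set C2 = V2" and a2: "alt_cycle col2 C2" using A(6) unfolding ham_alt_cycle_def by auto
  have ag1: "\<forall>u\<in>set C1. \<forall>v\<in>set C1. col u v = col1 u v" using A(8) s1 unfolding in_colored_sum_def by blast
  have ag2: "\<forall>u\<in>set C2. \<forall>v\<in>set C2. col u v = col2 u v" using A(8) s2 unfolding in_colored_sum_def by blast
  have ac1: "alt_cycle col C1" by (rule alt_transfer[OF a1 ag1])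
  have ac2: "alt_cycle col C2" by (rule alt_transfer[OF a2 ag2])
  have ext: "\<forall>u\<in>set C1. \<forall>w\<in>set C2. col u w \<noteq> None" using A(8) s1 s2 unfolding in_colored_sum_def by blast
  have ext': "\<forall>u\<in>set C2. \<forall>w\<in>set C1. col u w \<noteq> None"
  proof (intro ballI)
    fix u w assume "u \<in> set C2" "w \<in> set C1"
    then have "col w u \<noteq> None" using ext by blast
    then show "col u w \<noteq> None" by (simp add: sym[rule_format, of u w])
  qed
  have dj: "set C1 \<inter> set C2 = {}" using A(3) s1 s2 by simp
  have dj': "set C2 \<inter> set C1 = {}" using dj by blast
  have ngp': "\<not> has_good_pair col C2 C1" using ngp_swap[OF sym] A(9) by blast
  show ?thesis
  proof (cases "n \<le> m")
    case True
    have "\<forall>v\<in>set C1 \<union> set C2. \<forall>l. even l \<and> 4 * n \<le> l \<and> l \<le> 2 * m \<longrightarrow>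
           (\<exists>xs. alt_cycle col xs \<and> length xs = l \<and> v \<in> set xs)"
      by (rule main_lemma[OF sym ac1 ac2 A(5) A(7) dj ext A(9) A(10) A(11) True])
    then show ?thesis using True VV s1 s2 by simp
  next
    case False
    then have mn: "m \<le> n" by simp
    have "\<forall>v\<in>set C2 \<union> set C1. \<forall>l. even l \<and> 4 * m \<le> l \<and> l \<le> 2 * n \<longrightarrow>
           (\<exists>xs. alt_cycle col xs \<and> length xs = l \<and> v \<in> set xs)"
      by (rule main_lemma[OF sym ac2 ac1 A(7) A(5) dj' ext' ngp' A(11) A(10) mn])
    then show ?thesis using mn VV s1 s2 by (simp add: Un_commute)
  qed
qed



end
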